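(* Let $f$ be a DNF with $k$ terms and let $y\in\{0,1\}^n$ satisfy $f_{>\tau}$ and not $f_{\le\tau}$ ($\tau=1000k$). Fix any permutation $\pi$ and let $z_0,z_1,\dots$ be the sweep process started at $y$. Let $i$ be such that $(z_i)_a=y_a$ for all $a\in P(y)$, and let $U_i$ be the set of unanimous indices of $\mathcal{T}_f(z_i)$. Then $f(z_i^{\oplus j})=0$ for all $j\in U_i\setminus P(y)$.
   Context: Terms are sets of literals, a DNF is a set of terms; $g_{\le L}$ / $g_{>L}$ are the sub-DNFs of terms of length $\le L$ / $>L$. $\mathcal{T}_f(x)$ is the set of terms of $f$ satisfied by $x$. Protected set $P(y)$: for each term $T\in f$ not satisfied by $y$, take the literal of $T$ with smallest index not satisfied by $y$; $P(y)$ is the set of these indices. Unanimous indices of a set of terms $\mathcal{T}$: all $i$ such that every term of $\mathcal{T}$ contains $x_i$, or every term of $\mathcal{T}$ contains $\overline{x_i}$. $x^{\oplus j}$ is $x$ with bit $j$ flipped. Sweep process: given $y$ with $f(y)=1$ and a permutation $\pi$ listing $[n]$ as $\pi(0),\dots,\pi(n-1)$, $z_0=y$, and $z_{t+1}=z_t^{\oplus\pi(t)}$ if $f(z_t^{\oplus\pi(t)})=1$, else $z_{t+1}=z_t$. *)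

theory Defs
  imports Main
begin

(* A literal is (i, b): b = True means x_i, b = False means the negation of x_i.
   Assignments x \<in> {0,1}^n are functions nat \<Rightarrow> bool (only indices < n matter). *)

type_synonym lit = "nat \<times> bool"
type_synonym dterm = "lit set"
type_synonym dnf = "dterm set"

definition lit_sat :: "(nat \<Rightarrow> bool) \<Rightarrow> lit \<Rightarrow> bool" where
  "lit_sat x l \<longleftrightarrow> x (fst l) = snd l"

definition term_sat :: "(nat \<Rightarrow> bool) \<Rightarrow> dterm \<Rightarrow> bool" where
  "term_sat x T \<longleftrightarrow> (\<forall>l\<in>T. lit_sat x l)"

definition eval_dnf :: "dnf \<Rightarrow> (nat \<Rightarrow> bool) \<Rightarrow> bool" where
  "eval_dnf f x \<longleftrightarrow> (\<exists>T\<in>f. term_sat x T)"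

definition dnf_le :: "dnf \<Rightarrow> nat \<Rightarrow> dnf" where
  "dnf_le g L = {T\<in>g. card T \<le> L}"

definition dnf_gt :: "dnf \<Rightarrow> nat \<Rightarrow> dnf" where
  "dnf_gt g L = {T\<in>g. card T > L}"

definition sat_terms :: "dnf \<Rightarrow> (nat \<Rightarrow> bool) \<Rightarrow> dterm set" where
  "sat_terms f x = {T\<in>f. term_sat x T}"

definition protected :: "dnf \<Rightarrow> (nat \<Rightarrow> bool) \<Rightarrow> nat set" where
  "protected f y = {Min (fst ` {l\<in>T. \<not> lit_sat y l}) | T. T \<in> f \<and> \<not> term_sat y T}"

definition unanimous :: "dterm set \<Rightarrow> nat set" where
  "unanimous \<T> = {i. (\<forall>T\<in>\<T>. (i, True) \<in> T) \<or> (\<forall>T\<in>\<T>. (i, False) \<in> T)}"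

definition flip :: "(nat \<Rightarrow> bool) \<Rightarrow> nat \<Rightarrow> (nat \<Rightarrow> bool)" where
  "flip x j = x(j := \<not> x j)"

fun sweep :: "dnf \<Rightarrow> (nat \<Rightarrow> nat) \<Rightarrow> (nat \<Rightarrow> bool) \<Rightarrow> nat \<Rightarrow> (nat \<Rightarrow> bool)" where
  "sweep f \<pi> y 0 = y"
| "sweep f \<pi> y (Suc t) =
     (let z = sweep f \<pi> y t in
      if eval_dnf f (flip z (\<pi> t)) then flip z (\<pi> t) else z)"

end

theory Submission
  imports Defs
begin

lemma prot_lemma:
  assumes "S \<in> f" "finite S" "\<forall>a\<in>protected f y. x a = y a" "term_sat x S"
  shows "term_sat y S"
proof (rule ccontr)
  assume ns: "\<not> term_sat y S"
  define A where "A = fst ` {l\<in>S. \<not> lit_sat y l}"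
  have "A \<noteq> {}" using ns unfolding A_def term_sat_def by auto
  moreover have "finite A" using assms(2) unfolding A_def by auto
  ultimately have "Min A \<in> A" by simp
  then obtain l where l: "l \<in> S" "\<not> lit_sat y l" "fst l = Min A" unfolding A_def by auto
  have "Min A \<in> protected f y" unfolding protected_def A_def using assms(1) ns by blast
  then have "x (fst l) = y (fst l)" using assms(3) l by auto
  moreover have "lit_sat x l" using assms(4) l unfolding term_sat_def by auto
  ultimately show False using l(2) unfolding lit_sat_def by auto
qed

lemma sweep_sat: "eval_dnf f y \<Longrightarrow> eval_dnf f (sweep f \<pi> y t)"
  by (induction t) (auto simp: Let_def)

theorem lemma4p10:
  fixes f :: dnf and n k i :: nat and y :: "nat \<Rightarrow> bool" and \<pi> :: "nat \<Rightarrow> nat"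
  assumes fin_f: "finite f"
    and fin_terms: "\<forall>T\<in>f. finite T"
    and vars: "\<forall>T\<in>f. \<forall>l\<in>T. fst l < n"
    and k_def: "card f = k"
    and y_gt: "eval_dnf (dnf_gt f (1000 * k)) y"
    and y_le: "\<not> eval_dnf (dnf_le f (1000 * k)) y"
    and perm: "bij_betw \<pi> {..<n} {..<n}"
    and i_le: "i \<le> n"
    and agree: "\<forall>a\<in>protected f y. sweep f \<pi> y i a = y a"
  shows "\<forall>j \<in> unanimous (sat_terms f (sweep f \<pi> y i)) - protected f y.
           \<not> eval_dnf f (flip (sweep f \<pi> y i) j)"
proof (intro ballI notI)
  fix j
  define z where "z = sweep f \<pi> y i"
  assume j: "j \<in> unanimous (sat_terms f (sweep f \<pi> y i)) - protected f y"
    and ev: "eval_dnf f (flip (sweep f \<pi> y i) j)"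
  have jU: "j \<in> unanimous (sat_terms f z)" and jP: "j \<notin> protected f y"
    using j z_def by auto
  have fy: "eval_dnf f y" using y_gt unfolding eval_dnf_def dnf_gt_def by auto
  have "eval_dnf f z" using sweep_sat[OF fy] z_def by simp
  then obtain S where S: "S \<in> f" "term_sat z S" unfolding eval_dnf_def by auto
  have Sy: "term_sat y S" using prot_lemma[OF S(1) _ _ S(2)] fin_terms S(1) agree z_def by auto
  obtain T where T: "T \<in> f" "term_sat (flip z j) T" using ev z_def unfolding eval_dnf_def by auto
  have agree2: "\<forall>a\<in>protected f y. flip z j a = y a"
    using agree jP z_def unfolding flip_def by auto
  have Ty: "term_sat y T" using prot_lemma[OF T(1) _ agree2 T(2)] fin_terms T(1) by auto
  have Sin: "S \<in> sat_terms f z" using S unfolding sat_terms_def by auto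
  have yz: "y j = z j"
  proof -
    from jU Sin have "(j, True) \<in> S \<or> (j, False) \<in> S" unfolding unanimous_def by auto
    then show ?thesis using S(2) Sy unfolding term_sat_def lit_sat_def by auto
  qed
  have noj: "(j, b) \<notin> T" for b
  proof
    assume "(j, b) \<in> T"
    then have "y j = b" "flip z j j = b" using Ty T(2) unfolding term_sat_def lit_sat_def by auto
    then show False using yz unfolding flip_def by auto
  qed
  have "term_sat z T" using T(2) noj unfolding term_sat_def lit_sat_def flip_def
    by (metis fun_upd_other prod.collapse)
  then have "T \<in> sat_terms f z" using T(1) unfolding sat_terms_def by auto
  then have "(j, True) \<in> T \<or> (j, False) \<in> T" using jU Sin unfolding unanimous_def by auto
  then show False using noj by auto
qed

end
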